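(* Let $(M,\circ)$ be a fuzzy $\Gamma$-hypersemigroup. Then for all $a,b\in M$, $\alpha,\beta\in\Gamma$ and all fuzzy subsets $\mu,\nu,\delta$ of $M$: (i) $a\circ\alpha\circ(b\circ\beta\circ\mu)=(a\circ\alpha\circ b)\circ\beta\circ\mu$; (ii) $a\circ\alpha\circ(\mu\circ\beta\circ b)=(a\circ\alpha\circ\mu)\circ\beta\circ b$; (iii) $\mu\circ\alpha\circ(a\circ\beta\circ b)=(\mu\circ\alpha\circ a)\circ\beta\circ b$; (iv) $\mu\circ\alpha\circ(a\circ\beta\circ\nu)=(\mu\circ\alpha\circ a)\circ\beta\circ\nu$; (v) $a\circ\alpha\circ(\mu\circ\beta\circ\nu)=(a\circ\alpha\circ\mu)\circ\beta\circ\nu$; (vi) $\mu\circ\alpha\circ(\nu\circ\beta\circ a)=(\mu\circ\alpha\circ\nu)\circ\beta\circ a$; (vii) $\mu\circ\alpha\circ(\nu\circ\beta\circ\delta)=(\mu\circ\alpha\circ\nu)\circ\beta\circ\delta$.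
   Context: $M,\Gamma$ are nonempty sets; a fuzzy subset of $M$ is a map $M\to[0,1]$. A fuzzy $\Gamma$-hyperoperation assigns to each $(a,\gamma,b)\in M\times\Gamma\times M$ a fuzzy subset $a\circ\gamma\circ b$. For $a\in M$ and fuzzy $\mu$: $(a\circ\gamma\circ\mu)(r)=\bigvee_{t\in M}((a\circ\gamma\circ t)(r)\wedge\mu(t))$ if $\mu\ne0$, else $0$; $(\mu\circ\gamma\circ a)(r)=\bigvee_{t\in M}(\mu(t)\wedge(t\circ\gamma\circ a)(r))$ if $\mu\ne0$, else $0$. For fuzzy $\mu,\nu$: $(\mu\circ\gamma\circ\nu)(t)=\bigvee_{p,q\in M}(\mu(p)\wedge(p\circ\gamma\circ q)(t)\wedge\nu(q))$. Since $a\circ\alpha\circ b$ is itself a fuzzy subset, expressions like $(a\circ\alpha\circ b)\circ\beta\circ\mu$ use these definitions. $(M,\circ)$ is a fuzzy $\Gamma$-hypersemigroup if $(a\circ\alpha\circ b)\circ\beta\circ c=a\circ\alpha\circ(b\circ\beta\circ c)$ for all $a,b,c\in M$, $\alpha,\beta\in\Gamma$. *)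

theory Defs
  imports Complex_Main
begin

text \<open>M is modelled by the type 'm, Gamma by the type 'g (types are nonempty).
  Fuzzy subsets are real-valued maps with values in [0,1]; joins are real suprema.\<close>

definition fuzzy :: "('m \<Rightarrow> real) \<Rightarrow> bool" where
  "fuzzy \<mu> \<longleftrightarrow> (\<forall>x. 0 \<le> \<mu> x \<and> \<mu> x \<le> 1)"

definition fuzzy_hyperop :: "('m \<Rightarrow> 'g \<Rightarrow> 'm \<Rightarrow> 'm \<Rightarrow> real) \<Rightarrow> bool" where
  "fuzzy_hyperop h \<longleftrightarrow> (\<forall>a g b. fuzzy (h a g b))"

definition elt_fz :: "('m \<Rightarrow> 'g \<Rightarrow> 'm \<Rightarrow> 'm \<Rightarrow> real) \<Rightarrow> 'm \<Rightarrow> 'g \<Rightarrow> ('m \<Rightarrow> real) \<Rightarrow> ('m \<Rightarrow> real)" where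
  "elt_fz h a g \<mu> = (if \<mu> = (\<lambda>_. 0) then (\<lambda>_. 0)
      else (\<lambda>r. SUP t. min (h a g t r) (\<mu> t)))"

definition fz_elt :: "('m \<Rightarrow> 'g \<Rightarrow> 'm \<Rightarrow> 'm \<Rightarrow> real) \<Rightarrow> ('m \<Rightarrow> real) \<Rightarrow> 'g \<Rightarrow> 'm \<Rightarrow> ('m \<Rightarrow> real)" where
  "fz_elt h \<mu> g a = (if \<mu> = (\<lambda>_. 0) then (\<lambda>_. 0)
      else (\<lambda>r. SUP t. min (\<mu> t) (h t g a r)))"

definition fz_fz :: "('m \<Rightarrow> 'g \<Rightarrow> 'm \<Rightarrow> 'm \<Rightarrow> real) \<Rightarrow> ('m \<Rightarrow> real) \<Rightarrow> 'g \<Rightarrow> ('m \<Rightarrow> real) \<Rightarrow> ('m \<Rightarrow> real)" where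
  "fz_fz h \<mu> g \<nu> = (\<lambda>t. SUP pq. min (\<mu> (fst pq)) (min (h (fst pq) g (snd pq) t) (\<nu> (snd pq))))"

definition fuzzy_gamma_hypersemigroup :: "('m \<Rightarrow> 'g \<Rightarrow> 'm \<Rightarrow> 'm \<Rightarrow> real) \<Rightarrow> bool" where
  "fuzzy_gamma_hypersemigroup h \<longleftrightarrow> fuzzy_hyperop h \<and>
     (\<forall>a b c \<alpha> \<beta>. fz_elt h (h a \<alpha> b) \<beta> c = elt_fz h a \<alpha> (h b \<beta> c))"

end

theory Submission
  imports Defs "HOL-Library.Extended_Real"
begin
unbundle lattice_syntax

lemma SUP_pair: "(SUP pq. (f :: 'a \<times> 'b \<Rightarrow> 'c::complete_lattice) pq) = (SUP p. SUP q. f (p,q))"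
  by (rule antisym) (auto intro!: SUP_least intro: SUP_upper2)

definition "Eef H a g m = (\<lambda>r. SUP t. H a g t r \<sqinter> m t)"
definition "Efe H m g a = (\<lambda>r. SUP t. m t \<sqinter> H t g a r)"
definition "Eff H m g n = (\<lambda>r. SUP pq. m (fst pq) \<sqinter> (H (fst pq) g (snd pq) r \<sqinter> n (snd pq)))"

locale L =
  fixes H :: "'m \<Rightarrow> 'g \<Rightarrow> 'm \<Rightarrow> 'm \<Rightarrow> 'c::complete_distrib_lattice"
  assumes A: "\<And>a \<alpha> b \<beta> c r. (SUP t. H a \<alpha> b t \<sqinter> H t \<beta> c r) = (SUP t. H a \<alpha> t r \<sqinter> H b \<beta> c t)"
begin
lemmas D = inf_SUP SUP_inf SUP_pair inf.assoc inf.commute inf.left_commute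

lemma i: "Eef H a \<alpha> (Eef H b \<beta> m) = Eff H (H a \<alpha> b) \<beta> m"
proof
  fix r
  have "Eef H a \<alpha> (Eef H b \<beta> m) r = (SUP t. m t \<sqinter> (SUP s. H a \<alpha> s r \<sqinter> H b \<beta> t s))"
    unfolding Eef_def by (simp add: D) (rule antisym; fastforce intro!: SUP_least le_infI intro: SUP_upper2 le_infI1 le_infI2)
  also have "\<dots> = (SUP t. m t \<sqinter> (SUP s. H a \<alpha> b s \<sqinter> H s \<beta> t r))" by (simp add: A)
  also have "\<dots> = Eff H (H a \<alpha> b) \<beta> m r"
    unfolding Eff_def by (simp add: D) (rule antisym; fastforce intro!: SUP_least le_infI intro: SUP_upper2 le_infI1 le_infI2)
  finally show "Eef H a \<alpha> (Eef H b \<beta> m) r = Eff H (H a \<alpha> b) \<beta> m r" .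
qed

lemma ii: "Eef H a \<alpha> (Efe H m \<beta> b) = Efe H (Eef H a \<alpha> m) \<beta> b"
proof
  fix r
  have "Eef H a \<alpha> (Efe H m \<beta> b) r = (SUP t. m t \<sqinter> (SUP s. H a \<alpha> s r \<sqinter> H t \<beta> b s))"
    unfolding Eef_def Efe_def by (simp add: D) (rule antisym; fastforce intro!: SUP_least le_infI intro: SUP_upper2 le_infI1 le_infI2)
  also have "\<dots> = (SUP t. m t \<sqinter> (SUP s. H a \<alpha> t s \<sqinter> H s \<beta> b r))" by (simp add: A)
  also have "\<dots> = Efe H (Eef H a \<alpha> m) \<beta> b r"
    unfolding Eef_def Efe_def by (simp add: D) (rule antisym; fastforce intro!: SUP_least le_infI intro: SUP_upper2 le_infI1 le_infI2)
  finally show "Eef H a \<alpha> (Efe H m \<beta> b) r = Efe H (Eef H a \<alpha> m) \<beta> b r" .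
qed

lemma iii: "Eff H m \<alpha> (H a \<beta> b) = Efe H (Efe H m \<alpha> a) \<beta> b"
proof
  fix r
  have "Eff H m \<alpha> (H a \<beta> b) r = (SUP p. m p \<sqinter> (SUP q. H p \<alpha> q r \<sqinter> H a \<beta> b q))"
    unfolding Eff_def by (simp add: D)
  also have "\<dots> = (SUP p. m p \<sqinter> (SUP q. H p \<alpha> a q \<sqinter> H q \<beta> b r))" by (simp add: A)
  also have "\<dots> = Efe H (Efe H m \<alpha> a) \<beta> b r"
    unfolding Efe_def by (simp add: D) (rule antisym; fastforce intro!: SUP_least le_infI intro: SUP_upper2 le_infI1 le_infI2)
  finally show "Eff H m \<alpha> (H a \<beta> b) r = Efe H (Efe H m \<alpha> a) \<beta> b r" .
qed

lemma iv: "Eff H m \<alpha> (Eef H a \<beta> n) = Eff H (Efe H m \<alpha> a) \<beta> n"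
proof
  fix r
  have "Eff H m \<alpha> (Eef H a \<beta> n) r = (SUP p. SUP t. m p \<sqinter> (n t \<sqinter> (SUP q. H p \<alpha> q r \<sqinter> H a \<beta> t q)))"
    unfolding Eff_def Eef_def by (simp add: D) (rule antisym; fastforce intro!: SUP_least le_infI intro: SUP_upper2 le_infI1 le_infI2)
  also have "\<dots> = (SUP p. SUP t. m p \<sqinter> (n t \<sqinter> (SUP q. H p \<alpha> a q \<sqinter> H q \<beta> t r)))" by (simp add: A)
  also have "\<dots> = Eff H (Efe H m \<alpha> a) \<beta> n r"
    unfolding Eff_def Efe_def by (simp add: D) (rule antisym; fastforce intro!: SUP_least le_infI intro: SUP_upper2 le_infI1 le_infI2)
  finally show "Eff H m \<alpha> (Eef H a \<beta> n) r = Eff H (Efe H m \<alpha> a) \<beta> n r" .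
qed

lemma v: "Eef H a \<alpha> (Eff H m \<beta> n) = Eff H (Eef H a \<alpha> m) \<beta> n"
proof
  fix r
  have "Eef H a \<alpha> (Eff H m \<beta> n) r = (SUP p. SUP q. m p \<sqinter> (n q \<sqinter> (SUP s. H a \<alpha> s r \<sqinter> H p \<beta> q s)))"
    unfolding Eff_def Eef_def by (simp add: D) (rule antisym; fastforce intro!: SUP_least le_infI intro: SUP_upper2 le_infI1 le_infI2)
  also have "\<dots> = (SUP p. SUP q. m p \<sqinter> (n q \<sqinter> (SUP s. H a \<alpha> p s \<sqinter> H s \<beta> q r)))" by (simp add: A)
  also have "\<dots> = Eff H (Eef H a \<alpha> m) \<beta> n r"
    unfolding Eff_def Eef_def by (simp add: D) (rule antisym; fastforce intro!: SUP_least le_infI intro: SUP_upper2 le_infI1 le_infI2)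
  finally show "Eef H a \<alpha> (Eff H m \<beta> n) r = Eff H (Eef H a \<alpha> m) \<beta> n r" .
qed

lemma vi: "Eff H m \<alpha> (Efe H n \<beta> a) = Efe H (Eff H m \<alpha> n) \<beta> a"
proof
  fix r
  have "Eff H m \<alpha> (Efe H n \<beta> a) r = (SUP p. SUP q. m p \<sqinter> (n q \<sqinter> (SUP s. H p \<alpha> s r \<sqinter> H q \<beta> a s)))"
    unfolding Eff_def Efe_def by (simp add: D) (rule antisym; fastforce intro!: SUP_least le_infI intro: SUP_upper2 le_infI1 le_infI2)
  also have "\<dots> = (SUP p. SUP q. m p \<sqinter> (n q \<sqinter> (SUP s. H p \<alpha> q s \<sqinter> H s \<beta> a r)))" by (simp add: A)
  also have "\<dots> = Efe H (Eff H m \<alpha> n) \<beta> a r"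
    unfolding Eff_def Efe_def by (simp add: D) (rule antisym; fastforce intro!: SUP_least le_infI intro: SUP_upper2 le_infI1 le_infI2)
  finally show "Eff H m \<alpha> (Efe H n \<beta> a) r = Efe H (Eff H m \<alpha> n) \<beta> a r" .
qed

lemma vii: "Eff H m \<alpha> (Eff H n \<beta> d) = Eff H (Eff H m \<alpha> n) \<beta> d"
proof
  fix r
  have "Eff H m \<alpha> (Eff H n \<beta> d) r = (SUP p. SUP q. SUP t. m p \<sqinter> (n q \<sqinter> (d t \<sqinter> (SUP s. H p \<alpha> s r \<sqinter> H q \<beta> t s))))"
    unfolding Eff_def by (simp add: D) (rule antisym; fastforce intro!: SUP_least le_infI intro: SUP_upper2 le_infI1 le_infI2)
  also have "\<dots> = (SUP p. SUP q. SUP t. m p \<sqinter> (n q \<sqinter> (d t \<sqinter> (SUP s. H p \<alpha> q s \<sqinter> H s \<beta> t r))))" by (simp add: A)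
  also have "\<dots> = Eff H (Eff H m \<alpha> n) \<beta> d r"
    unfolding Eff_def by (simp add: D) (rule antisym; fastforce intro!: SUP_least le_infI intro: SUP_upper2 le_infI1 le_infI2)
  finally show "Eff H m \<alpha> (Eff H n \<beta> d) r = Eff H (Eff H m \<alpha> n) \<beta> d r" .
qed
end


lemma sup_bnd:
  fixes f :: "'a \<Rightarrow> real"
  assumes "\<And>i. 0 \<le> f i \<and> f i \<le> 1"
  shows "0 \<le> (SUP i. f i) \<and> (SUP i. f i) \<le> 1"
proof
  have bd: "bdd_above (range f)" using assms by (auto intro: bdd_aboveI[of _ 1])
  show "0 \<le> (SUP i. f i)" using assms cSUP_upper[OF _ bd, of undefined] by (meson UNIV_I order_trans)
  show "(SUP i. f i) \<le> 1" using assms by (intro cSUP_least) auto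
qed

lemma sup_e:
  fixes f :: "'a \<Rightarrow> real"
  assumes "\<And>i. 0 \<le> f i \<and> f i \<le> 1"
  shows "ereal (SUP i. f i) = (SUP i. ereal (f i))"
proof (rule ereal_SUP)
  have "(SUP i. ereal (f i)) \<le> 1" using assms by (intro SUP_least) auto
  moreover have "0 \<le> (SUP i. ereal (f i))" using assms
    by (meson SUP_upper UNIV_I ereal_less_eq(5) order_trans)
  ultimately show "\<bar>SUP i. ereal (f i)\<bar> \<noteq> \<infinity>" by auto
qed



definition "eH h = (\<lambda>a g b r. ereal (h a g b r))"
definition "em \<mu> = (\<lambda>r. ereal (\<mu> r))"

lemma em_inj: "em f = em g \<Longrightarrow> f = g"
  unfolding em_def by (rule ext) (metis ereal.inject)

lemma ereal_min: "ereal (min x y) = min (ereal x) (ereal y)"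
  by (simp add: min_def)

lemma min01: "0 \<le> x \<and> x \<le> 1 \<Longrightarrow> 0 \<le> y \<and> y \<le> 1 \<Longrightarrow> 0 \<le> min (x::real) y \<and> min x y \<le> 1"
  by auto

lemma L_ef:
  assumes h: "fuzzy_hyperop h" and m: "fuzzy \<mu>"
  shows "fuzzy (elt_fz h a g \<mu>) \<and> em (elt_fz h a g \<mu>) = Eef (eH h) a g (em \<mu>)"
proof -
  have hb: "\<And>a g b r. 0 \<le> h a g b r \<and> h a g b r \<le> 1" using h unfolding fuzzy_hyperop_def fuzzy_def by blast
  have mb: "\<And>r. 0 \<le> \<mu> r \<and> \<mu> r \<le> 1" using m unfolding fuzzy_def by blast
  have e: "elt_fz h a g \<mu> = (\<lambda>r. SUP t. min (h a g t r) (\<mu> t))"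
  proof (cases "\<mu> = (\<lambda>_. 0)")
    case True
    have "\<And>t r. min (h a g t r) 0 = 0" using hb by (smt (verit))
    then show ?thesis using True unfolding elt_fz_def by simp
  next
    case False then show ?thesis unfolding elt_fz_def by simp
  qed
  have bb: "\<And>r t. 0 \<le> min (h a g t r) (\<mu> t) \<and> min (h a g t r) (\<mu> t) \<le> 1"
    using hb mb by (intro min01)
  have X: "\<And>r. 0 \<le> (SUP t. (\<lambda>t. min (h a g t r) (\<mu> t)) t) \<and> (SUP t. (\<lambda>t. min (h a g t r) (\<mu> t)) t) \<le> 1 \<and> ereal (SUP t. (\<lambda>t. min (h a g t r) (\<mu> t)) t) = (SUP t. ereal ((\<lambda>t. min (h a g t r) (\<mu> t)) t))"
  proof -
    fix r
    show "0 \<le> (SUP t. (\<lambda>t. min (h a g t r) (\<mu> t)) t) \<and> (SUP t. (\<lambda>t. min (h a g t r) (\<mu> t)) t) \<le> 1 \<and> ereal (SUP t. (\<lambda>t. min (h a g t r) (\<mu> t)) t) = (SUP t. ereal ((\<lambda>t. min (h a g t r) (\<mu> t)) t))"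
      using sup_bnd[of "\<lambda>t. min (h a g t r) (\<mu> t)"] sup_e[of "\<lambda>t. min (h a g t r) (\<mu> t)"] bb by blast
  qed
  show ?thesis unfolding e
    using X by (auto simp: fuzzy_def em_def eH_def Eef_def inf_min ereal_min)
qed

lemma L_fe:
  assumes h: "fuzzy_hyperop h" and m: "fuzzy \<mu>"
  shows "fuzzy (fz_elt h \<mu> g a) \<and> em (fz_elt h \<mu> g a) = Efe (eH h) (em \<mu>) g a"
proof -
  have hb: "\<And>a g b r. 0 \<le> h a g b r \<and> h a g b r \<le> 1" using h unfolding fuzzy_hyperop_def fuzzy_def by blast
  have mb: "\<And>r. 0 \<le> \<mu> r \<and> \<mu> r \<le> 1" using m unfolding fuzzy_def by blast
  have e: "fz_elt h \<mu> g a = (\<lambda>r. SUP t. min (\<mu> t) (h t g a r))"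
  proof (cases "\<mu> = (\<lambda>_. 0)")
    case True
    have "\<And>t r. min 0 (h t g a r) = 0" using hb by (smt (verit))
    then show ?thesis using True unfolding fz_elt_def by simp
  next
    case False then show ?thesis unfolding fz_elt_def by simp
  qed
  have bb: "\<And>r t. 0 \<le> min (\<mu> t) (h t g a r) \<and> min (\<mu> t) (h t g a r) \<le> 1"
    using hb mb by (intro min01)
  have X: "\<And>r. 0 \<le> (SUP t. (\<lambda>t. min (\<mu> t) (h t g a r)) t) \<and> (SUP t. (\<lambda>t. min (\<mu> t) (h t g a r)) t) \<le> 1 \<and> ereal (SUP t. (\<lambda>t. min (\<mu> t) (h t g a r)) t) = (SUP t. ereal ((\<lambda>t. min (\<mu> t) (h t g a r)) t))"
  proof -
    fix r
    show "0 \<le> (SUP t. (\<lambda>t. min (\<mu> t) (h t g a r)) t) \<and> (SUP t. (\<lambda>t. min (\<mu> t) (h t g a r)) t) \<le> 1 \<and> ereal (SUP t. (\<lambda>t. min (\<mu> t) (h t g a r)) t) = (SUP t. ereal ((\<lambda>t. min (\<mu> t) (h t g a r)) t))"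
      using sup_bnd[of "\<lambda>t. min (\<mu> t) (h t g a r)"] sup_e[of "\<lambda>t. min (\<mu> t) (h t g a r)"] bb by blast
  qed
  show ?thesis unfolding e
    using X by (auto simp: fuzzy_def em_def eH_def Efe_def inf_min ereal_min)
qed

lemma L_ff:
  assumes h: "fuzzy_hyperop h" and m: "fuzzy \<mu>" and n: "fuzzy \<nu>"
  shows "fuzzy (fz_fz h \<mu> g \<nu>) \<and> em (fz_fz h \<mu> g \<nu>) = Eff (eH h) (em \<mu>) g (em \<nu>)"
proof -
  have hb: "\<And>a g b r. 0 \<le> h a g b r \<and> h a g b r \<le> 1" using h unfolding fuzzy_hyperop_def fuzzy_def by blast
  have mb: "\<And>r. 0 \<le> \<mu> r \<and> \<mu> r \<le> 1" using m unfolding fuzzy_def by blast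
  have nb: "\<And>r. 0 \<le> \<nu> r \<and> \<nu> r \<le> 1" using n unfolding fuzzy_def by blast
  have bb: "\<And>r pq. 0 \<le> min (\<mu> (fst pq)) (min (h (fst pq) g (snd pq) r) (\<nu> (snd pq))) \<and>
      min (\<mu> (fst pq)) (min (h (fst pq) g (snd pq) r) (\<nu> (snd pq))) \<le> 1"
    using hb mb nb by (intro min01)
  have X: "\<And>r. 0 \<le> (SUP t. (\<lambda>pq. min (\<mu> (fst pq)) (min (h (fst pq) g (snd pq) r) (\<nu> (snd pq)))) t) \<and> (SUP t. (\<lambda>pq. min (\<mu> (fst pq)) (min (h (fst pq) g (snd pq) r) (\<nu> (snd pq)))) t) \<le> 1 \<and> ereal (SUP t. (\<lambda>pq. min (\<mu> (fst pq)) (min (h (fst pq) g (snd pq) r) (\<nu> (snd pq)))) t) = (SUP t. ereal ((\<lambda>pq. min (\<mu> (fst pq)) (min (h (fst pq) g (snd pq) r) (\<nu> (snd pq)))) t))"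
  proof -
    fix r
    show "0 \<le> (SUP t. (\<lambda>pq. min (\<mu> (fst pq)) (min (h (fst pq) g (snd pq) r) (\<nu> (snd pq)))) t) \<and> (SUP t. (\<lambda>pq. min (\<mu> (fst pq)) (min (h (fst pq) g (snd pq) r) (\<nu> (snd pq)))) t) \<le> 1 \<and> ereal (SUP t. (\<lambda>pq. min (\<mu> (fst pq)) (min (h (fst pq) g (snd pq) r) (\<nu> (snd pq)))) t) = (SUP t. ereal ((\<lambda>pq. min (\<mu> (fst pq)) (min (h (fst pq) g (snd pq) r) (\<nu> (snd pq)))) t))"
      using sup_bnd[of "\<lambda>pq. min (\<mu> (fst pq)) (min (h (fst pq) g (snd pq) r) (\<nu> (snd pq)))"] sup_e[of "\<lambda>pq. min (\<mu> (fst pq)) (min (h (fst pq) g (snd pq) r) (\<nu> (snd pq)))"] bb by blast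
  qed
  show ?thesis unfolding fz_fz_def
    using X by (auto simp: fuzzy_def em_def eH_def Eff_def inf_min ereal_min)
qed

lemma LH: assumes "fuzzy_gamma_hypersemigroup h" shows "L (eH h)"
proof
  fix a \<alpha> b \<beta> c r
  have h: "fuzzy_hyperop h" using assms unfolding fuzzy_gamma_hypersemigroup_def by blast
  have f: "\<And>a g b. fuzzy (h a g b)" using h unfolding fuzzy_hyperop_def by blast
  have "em (fz_elt h (h a \<alpha> b) \<beta> c) = em (elt_fz h a \<alpha> (h b \<beta> c))"
    using assms unfolding fuzzy_gamma_hypersemigroup_def by simp
  hence "Efe (eH h) (em (h a \<alpha> b)) \<beta> c = Eef (eH h) a \<alpha> (em (h b \<beta> c))"
    using L_fe[OF h f] L_ef[OF h f] by simp
  hence "Efe (eH h) (em (h a \<alpha> b)) \<beta> c r = Eef (eH h) a \<alpha> (em (h b \<beta> c)) r" by simp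
  thus "(SUP t. eH h a \<alpha> b t \<sqinter> eH h t \<beta> c r) = (SUP t. eH h a \<alpha> t r \<sqinter> eH h b \<beta> c t)"
    unfolding Efe_def Eef_def em_def eH_def by simp
qed

theorem theorem3p14:
  fixes h :: "'m \<Rightarrow> 'g \<Rightarrow> 'm \<Rightarrow> 'm \<Rightarrow> real"
    and a b :: 'm and \<alpha> \<beta> :: 'g and \<mu> \<nu> \<delta> :: "'m \<Rightarrow> real"
  assumes "fuzzy_gamma_hypersemigroup h"
    and "fuzzy \<mu>" and "fuzzy \<nu>" and "fuzzy \<delta>"
  shows "elt_fz h a \<alpha> (elt_fz h b \<beta> \<mu>) = fz_fz h (h a \<alpha> b) \<beta> \<mu> \<and>
         elt_fz h a \<alpha> (fz_elt h \<mu> \<beta> b) = fz_elt h (elt_fz h a \<alpha> \<mu>) \<beta> b \<and>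
         fz_fz h \<mu> \<alpha> (h a \<beta> b) = fz_elt h (fz_elt h \<mu> \<alpha> a) \<beta> b \<and>
         fz_fz h \<mu> \<alpha> (elt_fz h a \<beta> \<nu>) = fz_fz h (fz_elt h \<mu> \<alpha> a) \<beta> \<nu> \<and>
         elt_fz h a \<alpha> (fz_fz h \<mu> \<beta> \<nu>) = fz_fz h (elt_fz h a \<alpha> \<mu>) \<beta> \<nu> \<and>
         fz_fz h \<mu> \<alpha> (fz_elt h \<nu> \<beta> a) = fz_elt h (fz_fz h \<mu> \<alpha> \<nu>) \<beta> a \<and>
         fz_fz h \<mu> \<alpha> (fz_fz h \<nu> \<beta> \<delta>) = fz_fz h (fz_fz h \<mu> \<alpha> \<nu>) \<beta> \<delta>"
  proof -
  have h: "fuzzy_hyperop h" using assms(1) unfolding fuzzy_gamma_hypersemigroup_def by blast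
  have f: "\<And>a g b. fuzzy (h a g b)" using h unfolding fuzzy_hyperop_def by blast
  interpret L "eH h" by (rule LH[OF assms(1)])
  note ef = L_ef[OF h] and fe = L_fe[OF h] and ff = L_ff[OF h]
  note F = assms(2-4) f
  have emh: "\<And>a g b. em (h a g b) = eH h a g b" unfolding em_def eH_def by simp
  show ?thesis
    apply (intro conjI; rule em_inj)
    using F
    by (simp_all add: ef fe ff emh i ii iii iv v vi vii)
qed

end
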